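(* Let $\mu$ be a finite signed Borel measure on $\mathbb{R}^n$, let $A_+,A_-$ be the sets of its Hahn decomposition, and let $\mu_+$ be its positive part. Let $$P_+=\{x\in A_+ : \exists\,\delta(x)>0 \text{ such that } \mu_+(B_r(x))\le 10\,\mu(B_r(x)) \text{ for all } r<\delta(x)\}.$$ Then $\mu(P_+)=\mu(A_+)$.
   Context: $B_r(x)$ is the ball in $\mathbb{R}^n$ of radius $r$ centered at $x$. The Hahn decomposition means $\mathbb{R}^n=A_+\sqcup A_-$ with $\mu\ge0$ on subsets of $A_+$ and $\mu\le0$ on subsets of $A_-$; $\mu_+(E)=\mu(E\cap A_+)$. *)

theory Defs
  imports "HOL-Analysis.Analysis"
begin

text \<open>Values on non-measurable sets are irrelevant.\<close>
definition signed_measure :: "'a measure \<Rightarrow> ('a set \<Rightarrow> real) \<Rightarrow> bool" where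
  "signed_measure M \<mu> \<longleftrightarrow> \<mu> {} = 0 \<and>
     (\<forall>A::nat \<Rightarrow> 'a set. range A \<subseteq> sets M \<longrightarrow> disjoint_family A \<longrightarrow>
        (\<lambda>i. \<mu> (A i)) sums \<mu> (\<Union>i. A i))"

definition hahn_decomposition :: "'a measure \<Rightarrow> ('a set \<Rightarrow> real) \<Rightarrow> 'a set \<Rightarrow> bool" where
  "hahn_decomposition M \<mu> Ap \<longleftrightarrow> Ap \<in> sets M \<and>
     (\<forall>E\<in>sets M. E \<subseteq> Ap \<longrightarrow> \<mu> E \<ge> 0) \<and>
     (\<forall>E\<in>sets M. E \<subseteq> space M - Ap \<longrightarrow> \<mu> E \<le> 0)"

definition pos_part :: "('a set \<Rightarrow> real) \<Rightarrow> 'a set \<Rightarrow> 'a set \<Rightarrow> real" where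
  "pos_part \<mu> Ap E = \<mu> (E \<inter> Ap)"

end

theory Submission
  imports Defs
begin


lemma sep_bound:
  fixes B :: "'a::euclidean_space set"
  assumes "bounded B" "e > 0"
  shows "\<exists>Nb. \<forall>X \<subseteq> B. (\<forall>x\<in>X. \<forall>y\<in>X. x \<noteq> y \<longrightarrow> 2*e \<le> dist x y) \<longrightarrow> finite X \<and> card X \<le> Nb"
proof -
  obtain a R where R: "B \<subseteq> cball a R" using assms(1) unfolding bounded_subset_cball by blast
  have "compact (cball a R)" by simp
  then have "seq_compact (cball a R)" by (rule compact_imp_seq_compact)
  then have "\<forall>\<epsilon>>0. \<exists>k. finite k \<and> k \<subseteq> cball a R \<and> cball a R \<subseteq> (\<Union>x\<in>k. ball x \<epsilon>)"
    by (rule seq_compact_imp_totally_bounded)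
  then obtain F where F: "finite F" "cball a R \<subseteq> (\<Union>x\<in>F. ball x e)"
    using assms(2) by blast
  show ?thesis
  proof (intro exI[of _ "card F"] allI impI)
    fix X assume XB: "X \<subseteq> B" and sep: "\<forall>x\<in>X. \<forall>y\<in>X. x \<noteq> y \<longrightarrow> 2*e \<le> dist x y"
    define g where "g x = (SOME f. f\<in>F \<and> x \<in> ball f e)" for x
    have g: "g x \<in> F \<and> x \<in> ball (g x) e" if "x \<in> X" for x
    proof -
      have "\<exists>f. f\<in>F \<and> x \<in> ball f e" using that XB R F(2) by blast
      then show ?thesis unfolding g_def by (rule someI_ex)
    qed
    have inj: "inj_on g X"
    proof (rule inj_onI, rule ccontr)
      fix x y assume xy: "x \<in> X" "y \<in> X" "g x = g y" "x \<noteq> y"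
      have "dist x y \<le> dist x (g x) + dist (g y) y" using xy(3) dist_triangle[of x y "g x"]
        by (simp add: dist_commute)
      also have "\<dots> < 2*e" using g[OF xy(1)] g[OF xy(2)] by (simp add: dist_commute)
      finally have "dist x y < 2*e" .
      moreover have "2*e \<le> dist x y" using sep xy(1,2,4) by blast
      ultimately show False by linarith
    qed
    have sub: "g ` X \<subseteq> F" using g by blast
    show "finite X \<and> card X \<le> card F"
      using inj_on_finite[OF inj sub F(1)] card_inj_on_le[OF inj sub F(1)] by blast
  qed
qed

lemma max_sep:
  fixes T :: "'a::euclidean_space set"
  assumes "bounded T" "s > 0"
  shows "\<exists>C \<subseteq> T. finite C \<and> (\<forall>c\<in>C. \<forall>c'\<in>C. c \<noteq> c' \<longrightarrow> s \<le> dist c c') \<and> T \<subseteq> (\<Union>c\<in>C. ball c s)"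
proof -
  obtain Nb where Nb: "\<forall>X \<subseteq> T. (\<forall>x\<in>X. \<forall>y\<in>X. x \<noteq> y \<longrightarrow> 2*(s/2) \<le> dist x y) \<longrightarrow> finite X \<and> card X \<le> Nb"
    using sep_bound[OF assms(1), of "s/2"] assms(2) by auto
  define Pp where "Pp X \<longleftrightarrow> X \<subseteq> T \<and> (\<forall>x\<in>X. \<forall>y\<in>X. x \<noteq> y \<longrightarrow> s \<le> dist x y)" for X
  define P where "P n \<longleftrightarrow> (\<exists>X. Pp X \<and> card X = n)" for n
  have "P 0" unfolding P_def Pp_def by (intro exI[of _ "{}"]) auto
  moreover have "\<forall>y. P y \<longrightarrow> y \<le> Nb" unfolding P_def Pp_def using Nb by auto
  ultimately obtain n where n: "P n" "\<forall>y. P y \<longrightarrow> y \<le> n" using Nat.ex_has_greatest_nat by metis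
  then obtain X where X: "Pp X" "card X = n" unfolding P_def by blast
  have finX: "finite X" using X(1) Nb unfolding Pp_def by auto
  have cov: "T \<subseteq> (\<Union>c\<in>X. ball c s)"
  proof
    fix y assume yT: "y \<in> T"
    show "y \<in> (\<Union>c\<in>X. ball c s)"
    proof (rule ccontr)
      assume nc: "y \<notin> (\<Union>c\<in>X. ball c s)"
      then have yX: "y \<notin> X" using assms(2) by force
      have "Pp (insert y X)" using X(1) yT nc unfolding Pp_def
        by (auto simp: dist_commute not_less)
      then have "P (Suc n)" unfolding P_def using finX yX X(2) by (intro exI[of _ "insert y X"]) auto
      then show False using n(2) by force
    qed
  qed
  show ?thesis using X(1) finX cov unfolding Pp_def by blast
qed

lemma cover_levels:
  fixes K :: "'a::euclidean_space set"
  assumes "finite S" "\<forall>s\<in>S. s > 0" "bounded K" "\<rho> ` K \<subseteq> S"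
  shows "\<exists>C \<subseteq> K. finite C \<and> (\<forall>c\<in>C. \<forall>c'\<in>C. c \<noteq> c' \<and> \<rho> c' \<le> \<rho> c \<longrightarrow> \<rho> c \<le> dist c c') \<and> K \<subseteq> (\<Union>c\<in>C. ball c (\<rho> c))"
  using assms
proof (induction "card S" arbitrary: S K rule: less_induct)
  case less
  show ?case
  proof (cases "S = {}")
    case True
    then have "K = {}" using less.prems(4) by auto
    then show ?thesis by auto
  next
    case False
    define s where "s = Max S"
    have sS: "s \<in> S" using False less.prems(1) s_def by simp
    have spos: "s > 0" using sS less.prems(2) by blast
    have smax: "\<forall>t\<in>S. t \<le> s" using less.prems(1) s_def by simp
    define T where "T = {y\<in>K. \<rho> y = s}"
    have bT: "bounded T" using less.prems(3) by (rule bounded_subset) (auto simp: T_def)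
    obtain C1 where C1: "C1 \<subseteq> T" "finite C1" "\<forall>c\<in>C1. \<forall>c'\<in>C1. c \<noteq> c' \<longrightarrow> s \<le> dist c c'"
      "T \<subseteq> (\<Union>c\<in>C1. ball c s)"
      using max_sep[OF bT spos] by blast
    define K' where "K' = K - (\<Union>c\<in>C1. ball c s)"
    have rK': "\<rho> ` K' \<subseteq> S - {s}"
    proof
      fix t assume "t \<in> \<rho> ` K'"
      then obtain y where y: "y \<in> K'" "t = \<rho> y" by blast
      have yK: "y \<in> K" and yn: "y \<notin> (\<Union>c\<in>C1. ball c s)" using y(1) unfolding K'_def by auto
      have "\<rho> y \<in> S" using less.prems(4) yK by blast
      moreover have "\<rho> y \<noteq> s"
      proof
        assume "\<rho> y = s"
        then have "y \<in> T" using yK unfolding T_def by blast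
        then show False using C1(4) yn by blast
      qed
      ultimately show "t \<in> S - {s}" using y(2) by blast
    qed
    have cardlt: "card (S - {s}) < card S" using sS less.prems(1) by (meson card_Diff1_less)
    obtain C2 where C2: "C2 \<subseteq> K'" "finite C2" "\<forall>c\<in>C2. \<forall>c'\<in>C2. c \<noteq> c' \<and> \<rho> c' \<le> \<rho> c \<longrightarrow> \<rho> c \<le> dist c c'"
      "K' \<subseteq> (\<Union>c\<in>C2. ball c (\<rho> c))"
    proof -
      have b1: "bounded K'" using less.prems(3) by (rule bounded_subset) (auto simp: K'_def)
      have b2: "finite (S - {s})" using less.prems(1) by auto
      have b3: "\<forall>t\<in>S - {s}. t > 0" using less.prems(2) by auto
      have "\<exists>C \<subseteq> K'. finite C \<and> (\<forall>c\<in>C. \<forall>c'\<in>C. c \<noteq> c' \<and> \<rho> c' \<le> \<rho> c \<longrightarrow> \<rho> c \<le> dist c c') \<and> K' \<subseteq> (\<Union>c\<in>C. ball c (\<rho> c))"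
        by (rule less.hyps[OF cardlt b2 b3 b1 rK'])
      then show ?thesis using that by blast
    qed
    have rC1: "\<forall>c\<in>C1. \<rho> c = s" using C1(1) unfolding T_def by auto
    have rC2: "\<forall>c\<in>C2. \<rho> c < s" 
    proof
      fix c assume "c \<in> C2"
      then have "\<rho> c \<in> S - {s}" using C2(1) rK' by blast
      then show "\<rho> c < s" using smax by force
    qed
    have adm: "\<forall>c\<in>C1 \<union> C2. \<forall>c'\<in>C1 \<union> C2. c \<noteq> c' \<and> \<rho> c' \<le> \<rho> c \<longrightarrow> \<rho> c \<le> dist c c'"
    proof (intro ballI impI)
      fix c c' assume c: "c \<in> C1 \<union> C2" and c': "c' \<in> C1 \<union> C2" and h: "c \<noteq> c' \<and> \<rho> c' \<le> \<rho> c"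
      show "\<rho> c \<le> dist c c'"
      proof (cases "c \<in> C1")
        case True
        show ?thesis
        proof (cases "c' \<in> C1")
          case True
          then show ?thesis using \<open>c \<in> C1\<close> C1(3) rC1 h by auto
        next
          case False
          then have "c' \<in> K'" using c' C2(1) by auto
          then have "c' \<notin> ball c s" using True unfolding K'_def by auto
          then show ?thesis using rC1 True by (simp add: not_less)
        qed
      next
        case False
        then have cC2: "c \<in> C2" using c by auto
        show ?thesis
        proof (cases "c' \<in> C1")
          case True
          then show ?thesis using rC1 rC2 cC2 h by force
        next
          case False
          then show ?thesis using cC2 c' C2(3) h by auto
        qed
      qed
    qed
    have cov: "K \<subseteq> (\<Union>c\<in>C1 \<union> C2. ball c (\<rho> c))"
    proof
      fix y assume "y \<in> K"
      show "y \<in> (\<Union>c\<in>C1 \<union> C2. ball c (\<rho> c))"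
      proof (cases "y \<in> K'")
        case True then show ?thesis using C2(4) by blast
      next
        case False
        then obtain c where "c \<in> C1" "y \<in> ball c s" using \<open>y \<in> K\<close> unfolding K'_def by blast
        then show ?thesis using rC1 by force
      qed
    qed
    have "C1 \<union> C2 \<subseteq> K" using C1(1) C2(1) unfolding T_def K'_def by auto
    moreover have "finite (C1 \<union> C2)" using C1(2) C2(2) by simp
    ultimately show ?thesis using adm cov by (intro exI[of _ "C1 \<union> C2"]) simp
  qed
qed



lemma unit_sep:
  fixes p q :: "'a::euclidean_space"
  assumes "norm p < norm (p - q)" "norm q < norm (p - q)" "p \<noteq> 0" "q \<noteq> 0"
  shows "1 < dist (p /\<^sub>R norm p) (q /\<^sub>R norm q)"
proof -
  define a where "a = norm p"
  define b where "b = norm q"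
  have a0: "a > 0" and b0: "b > 0" using assms(3,4) by (auto simp: a_def b_def)
  have h: "norm (p - q)^2 = a^2 + b^2 - 2*(p \<bullet> q)"
    by (simp add: a_def b_def power2_norm_eq_inner inner_diff_left inner_diff_right inner_commute)
  have "a^2 < norm (p - q)^2" using assms(1) a0 unfolding a_def by (simp add: power_strict_mono)
  then have h1: "2*(p \<bullet> q) < b^2" using h by linarith
  have "b^2 < norm (p - q)^2" using assms(2) b0 unfolding b_def by (simp add: power_strict_mono)
  then have h2: "2*(p \<bullet> q) < a^2" using h by linarith
  have h3: "2*(p \<bullet> q) < a*b"
  proof (cases "a \<le> b")
    case True
    then have "a^2 \<le> a*b" using a0 by (simp add: power2_eq_square)
    then show ?thesis using h2 by linarith
  next
    case False
    then have "b^2 \<le> a*b" using b0 by (simp add: power2_eq_square)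
    then show ?thesis using h1 by linarith
  qed
  have pp: "p \<bullet> p = a^2" and qq: "q \<bullet> q = b^2" by (simp_all add: a_def b_def power2_norm_eq_inner)
  define u where "u = p /\<^sub>R a"
  define v where "v = q /\<^sub>R b"
  have "(dist u v)^2 = (u - v) \<bullet> (u - v)" by (simp add: dist_norm power2_norm_eq_inner)
  also have "\<dots> = u \<bullet> u + v \<bullet> v - 2*(u \<bullet> v)"
    by (simp add: inner_diff_left inner_diff_right inner_commute)
  also have "u \<bullet> u = 1" using pp a0 by (simp add: u_def power2_eq_square field_simps)
  also have "v \<bullet> v = 1" using qq b0 by (simp add: v_def power2_eq_square field_simps)
  also have "u \<bullet> v = (p \<bullet> q)/(a*b)" by (simp add: u_def v_def field_simps)
  finally have d: "(dist (p /\<^sub>R a) (q /\<^sub>R b))^2 = 2 - 2*((p \<bullet> q)/(a*b))"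
    by (simp add: u_def v_def field_simps)
  have "2*((p \<bullet> q)/(a*b)) < 1" using h3 a0 b0 by (simp add: field_simps)
  then have "1 < (dist (p /\<^sub>R a) (q /\<^sub>R b))^2" using d by linarith
  then have "1 < dist (p /\<^sub>R a) (q /\<^sub>R b)"
    by (smt (verit) one_less_power zero_le_dist power_le_one)
  then show ?thesis by (simp add: a_def b_def)
qed

lemma overlap_bound:
  "\<exists>M::nat. \<forall>(C::'a::euclidean_space set) (\<rho>::'a\<Rightarrow>real) y. finite C \<longrightarrow>
     (\<forall>c\<in>C. \<forall>c'\<in>C. c \<noteq> c' \<and> \<rho> c' \<le> \<rho> c \<longrightarrow> \<rho> c \<le> dist c c') \<longrightarrow>
     card {c\<in>C. y \<in> ball c (\<rho> c)} \<le> M"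
proof -
  have bs: "bounded (sphere (0::'a) 1)" by simp
  obtain Ms where Ms: "\<forall>X \<subseteq> sphere (0::'a) 1. (\<forall>x\<in>X. \<forall>y\<in>X. x \<noteq> y \<longrightarrow> 2*(1/2) \<le> dist x y) \<longrightarrow> finite X \<and> card X \<le> Ms"
    using sep_bound[OF bs, of "1/2"] by auto
  show ?thesis
  proof (intro exI[of _ "max 1 Ms"] allI impI)
    fix C :: "'a set" and \<rho> :: "'a \<Rightarrow> real" and y :: 'a
    assume fin: "finite C" and adm: "\<forall>c\<in>C. \<forall>c'\<in>C. c \<noteq> c' \<and> \<rho> c' \<le> \<rho> c \<longrightarrow> \<rho> c \<le> dist c c'"
    define I where "I = {c\<in>C. y \<in> ball c (\<rho> c)}"
    have finI: "finite I" using fin unfolding I_def by simp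
    show "card I \<le> max 1 Ms"
    proof (cases "card I \<le> 1")
      case True then show ?thesis by simp
    next
      case False
      have two: "\<exists>c'\<in>I. c' \<noteq> c" if "c \<in> I" for c
      proof (rule ccontr)
        assume "\<not> (\<exists>c'\<in>I. c' \<noteq> c)"
        then have "I \<subseteq> {c}" by blast
        then have "card I \<le> 1" using card_mono[of "{c}" I] by simp
        then show False using False by simp
      qed
      have key: "norm (c - y) < norm ((c - y) - (c' - y)) \<and> norm (c' - y) < norm ((c - y) - (c' - y))"
        if "c \<in> I" "c' \<in> I" "c \<noteq> c'" "\<rho> c' \<le> \<rho> c" for c c'
      proof -
        have "\<rho> c \<le> dist c c'" using adm that unfolding I_def by blast
        moreover have "dist c y < \<rho> c" "dist c' y < \<rho> c'" using that unfolding I_def by (auto simp: dist_commute)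
        ultimately show ?thesis using that(4) by (simp add: dist_norm)
      qed
      have ne: "c \<noteq> y" if cI: "c \<in> I" for c
      proof
        assume cy: "c = y"
        obtain c' where c': "c' \<in> I" "c' \<noteq> c" using two[OF cI] by blast
        show False
        proof (cases "\<rho> c' \<le> \<rho> c")
          case True
          then show False using key[OF cI c'(1) c'(2)[symmetric] True] cy by (simp add: norm_minus_commute)
        next
          case False
          then show False using key[OF c'(1) cI c'(2) ] cy by (simp add: norm_minus_commute)
        qed
      qed
      define u where "u c = (c - y) /\<^sub>R norm (c - y)" for c
      have sepu: "1 < dist (u c) (u c')" if "c \<in> I" "c' \<in> I" "c \<noteq> c'" for c c'
      proof (cases "\<rho> c' \<le> \<rho> c")
        case True
        show ?thesis unfolding u_def
          using unit_sep[of "c - y" "c' - y"] key[OF that True] ne that by auto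
      next
        case False
        then have "\<rho> c \<le> \<rho> c'" by simp
        then have "1 < dist (u c') (u c)" unfolding u_def
          using unit_sep[of "c' - y" "c - y"] key[OF that(2,1) that(3)[symmetric]] ne that by auto
        then show ?thesis by (simp add: dist_commute)
      qed
      have inj: "inj_on u I"
      proof (rule inj_onI, rule ccontr)
        fix c c' assume "c \<in> I" "c' \<in> I" "u c = u c'" "c \<noteq> c'"
        then show False using sepu[of c c'] by simp
      qed
      have sph: "u ` I \<subseteq> sphere 0 1" using ne unfolding u_def by auto
      have "\<forall>x\<in>u ` I. \<forall>z\<in>u ` I. x \<noteq> z \<longrightarrow> 2*(1/2) \<le> dist x z"
        using sepu by (auto intro: less_imp_le)
      then have "card (u ` I) \<le> Ms" using Ms sph by blast
      then show ?thesis using card_image[OF inj] by simp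
    qed
  qed
qed



lemma mk_meas:
  fixes f :: "'a::topological_space set \<Rightarrow> real"
  assumes f0: "f {} = 0" and fpos: "\<And>E. E \<in> sets borel \<Longrightarrow> f E \<ge> 0"
    and fadd: "\<And>A. range A \<subseteq> sets borel \<Longrightarrow> disjoint_family A \<Longrightarrow> (\<lambda>i. f (A i)) sums f (\<Union>i. A i)"
  shows "sets (measure_of UNIV (sets borel) (\<lambda>E. ennreal (f E))) = sets borel"
    and "\<And>E. E \<in> sets borel \<Longrightarrow> measure (measure_of UNIV (sets borel) (\<lambda>E. ennreal (f E))) E = f E"
    and "finite_measure (measure_of UNIV (sets borel) (\<lambda>E. ennreal (f E)))"
proof -
  define M where "M = measure_of UNIV (sets borel) (\<lambda>E. ennreal (f E))"
  have sa: "sigma_algebra UNIV (sets borel)" using sets.sigma_algebra_axioms[of borel] by simp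
  have pos: "positive (sets borel) (\<lambda>E. ennreal (f E))" by (simp add: positive_def f0)
  have ca: "countably_additive (sets borel) (\<lambda>E. ennreal (f E))"
    unfolding countably_additive_def
  proof (intro allI impI)
    fix A :: "nat \<Rightarrow> 'a set" assume A: "range A \<subseteq> sets borel" "disjoint_family A"
    have "(\<lambda>i. f (A i)) sums f (\<Union>i. A i)" by (rule fadd[OF A])
    moreover have "\<And>i. 0 \<le> f (A i)" using A(1) fpos by blast
    moreover have "0 \<le> f (\<Union>i. A i)" using A(1) fpos by blast
    ultimately have "(\<lambda>i. ennreal (f (A i))) sums ennreal (f (\<Union>i. A i))" by simp
    then show "(\<Sum>i. ennreal (f (A i))) = ennreal (f (\<Union>i. A i))" by (rule sums_unique[symmetric])
  qed
  have em: "emeasure M E = ennreal (f E)" if "E \<in> sets borel" for E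
    unfolding M_def by (rule emeasure_measure_of_sigma[OF sa pos ca that])
  show ss: "sets (measure_of UNIV (sets borel) (\<lambda>E. ennreal (f E))) = sets borel"
  proof -
    have e: "sigma_sets UNIV (sets borel) = sets (borel::'a measure)"
      using sets.sigma_sets_eq[of borel] by (simp only: space_borel)
    show ?thesis by (simp only: sets_measure_of_conv e) simp
  qed
  show "measure (measure_of UNIV (sets borel) (\<lambda>E. ennreal (f E))) E = f E" if "E \<in> sets borel" for E
  proof -
    have "measure M E = enn2real (emeasure M E)" by (simp only: measure_def)
    also have "\<dots> = f E" using em[OF that] fpos[OF that] by simp
    finally show ?thesis unfolding M_def .
  qed
  have sp: "space M = UNIV" unfolding M_def by (simp only: space_measure_of_conv)
  have "emeasure M (space M) \<noteq> \<infinity>" using em[of UNIV] sp by simp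
  then show "finite_measure (measure_of UNIV (sets borel) (\<lambda>E. ennreal (f E)))"
    unfolding M_def by (rule finite_measureI)
qed

lemma ball_meas:
  fixes M :: "'a::euclidean_space measure"
  assumes "finite_measure M" "sets M = sets borel"
  shows "(\<lambda>x. measure M (ball x r)) \<in> borel_measurable borel"
proof -
  interpret finite_measure M by fact
  define Q where "Q = {p::'a\<times>'a. dist (fst p) (snd p) < r}"
  have "open Q" unfolding Q_def
    by (intro open_Collect_less continuous_intros)
  then have "Q \<in> sets (borel :: ('a \<times> 'a) measure)" by simp
  also have "sets (borel :: ('a \<times> 'a) measure) = sets (borel \<Otimes>\<^sub>M M)"
  proof -
    have "sets (borel \<Otimes>\<^sub>M M) = sets (borel \<Otimes>\<^sub>M (borel::'a measure))"
      by (rule sets_pair_measure_cong) (simp_all add: assms(2))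
    also have "\<dots> = sets (borel :: ('a \<times> 'a) measure)" by (simp only: borel_prod)
    finally show ?thesis by simp
  qed
  finally have Q: "Q \<in> sets (borel \<Otimes>\<^sub>M M)" .
  have "(\<lambda>x. emeasure M (Pair x -` Q)) \<in> borel_measurable borel"
    by (rule measurable_emeasure_Pair[OF Q])
  moreover have "Pair x -` Q = ball x r" for x unfolding Q_def ball_def by auto
  ultimately have "(\<lambda>x. emeasure M (ball x r)) \<in> borel_measurable borel" by simp
  then show ?thesis unfolding measure_def by measurable
qed

lemma ball_lim:
  fixes M :: "'a::euclidean_space measure"
  assumes "finite_measure M" "sets M = sets borel" "r > 0"
  shows "(\<lambda>j. measure M (ball x (r * (1 - inverse (real (Suc j)))))) \<longlonglongrightarrow> measure M (ball x r)"
proof -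
  interpret finite_measure M by fact
  define A where "A j = ball x (r * (1 - inverse (real (Suc j))))" for j :: nat
  have inc: "incseq A" unfolding A_def
  proof (rule incseq_SucI, rule subset_ball)
    fix n :: nat
    have "inverse (real (Suc (Suc n))) \<le> inverse (real (Suc n))"
      by (rule le_imp_inverse_le) auto
    then have "1 - inverse (real (Suc n)) \<le> 1 - inverse (real (Suc (Suc n)))" by linarith
    then show "r * (1 - inverse (real (Suc n))) \<le> r * (1 - inverse (real (Suc (Suc n))))"
      using assms(3) by (intro mult_left_mono) auto
  qed
  have un: "(\<Union>j. A j) = ball x r"
  proof
    show "(\<Union>j. A j) \<subseteq> ball x r" unfolding A_def
    proof (intro UN_least subset_ball)
      fix j :: nat
      have "0 \<le> inverse (real (Suc j))" by simp
      then have "1 - inverse (real (Suc j)) \<le> 1" by linarith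
      then show "r * (1 - inverse (real (Suc j))) \<le> r" using assms(3) by (simp add: mult_left_le)
    qed
  next
    show "ball x r \<subseteq> (\<Union>j. A j)"
    proof
      fix z assume "z \<in> ball x r"
      then have d: "dist x z < r" by simp
      define t where "t = 1 - dist x z / r"
      have "dist x z / r < 1" using d assms(3) by simp
      then have t: "t > 0" by (simp add: t_def)
      obtain j where j: "inverse (real (Suc j)) < t" using reals_Archimedean[OF t] by blast
      have "r * (dist x z / r) < r * (1 - inverse (real (Suc j)))"
        using j assms(3) unfolding t_def by (intro mult_strict_left_mono) linarith+
      moreover have "r * (dist x z / r) = dist x z" using assms(3) by simp
      ultimately have "dist x z < r * (1 - inverse (real (Suc j)))" by linarith
      then show "z \<in> (\<Union>j. A j)" unfolding A_def by auto
    qed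
  qed
  have "A j \<in> sets M" for j unfolding assms(2) A_def by (rule borel_open) (rule open_ball)
  then have "range A \<subseteq> sets M" by blast
  from finite_Lim_measure_incseq[OF this inc]
  have "(\<lambda>i. measure M (A i)) \<longlonglongrightarrow> measure M (\<Union>(range A))" .
  then show ?thesis unfolding un by (simp only: A_def)
qed

lemma overlap_sum:
  fixes L :: "'a::euclidean_space measure"
  assumes "finite_measure L" "sets L = sets borel" "finite C"
    and B: "\<And>c. c \<in> C \<Longrightarrow> B c \<in> sets borel" "\<And>c. c \<in> C \<Longrightarrow> B c \<subseteq> U"
    and U: "U \<in> sets borel" and M: "\<And>y. card {c\<in>C. y \<in> B c} \<le> M"
  shows "(\<Sum>c\<in>C. measure L (B c)) \<le> real M * measure L U"
proof -
  interpret finite_measure L by fact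
  have "ennreal (\<Sum>c\<in>C. measure L (B c)) = (\<Sum>c\<in>C. emeasure L (B c))"
    using B(1) assms(2) by (simp add: emeasure_eq_measure sum_ennreal)
  also have "\<dots> = (\<Sum>c\<in>C. \<integral>\<^sup>+ x. indicator (B c) x \<partial>L)"
    using B(1) assms(2) by (intro sum.cong) (auto simp: nn_integral_indicator)
  also have "\<dots> = \<integral>\<^sup>+ x. (\<Sum>c\<in>C. indicator (B c) x) \<partial>L"
    using B(1) assms(2) by (intro nn_integral_sum[symmetric]) auto
  also have "\<dots> \<le> \<integral>\<^sup>+ x. of_nat M * indicator U x \<partial>L"
  proof (intro nn_integral_mono)
    fix x
    have eq: "(\<Sum>c\<in>C. indicator (B c) x :: ennreal) = of_nat (card {c\<in>C. x \<in> B c})"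
      using assms(3) by (simp add: indicator_def sum.If_cases Int_def)
    show "(\<Sum>c\<in>C. indicator (B c) x :: ennreal) \<le> of_nat M * indicator U x"
    proof (cases "x \<in> U")
      case True
      then show ?thesis using eq M[of x] by simp
    next
      case False
      then have "{c\<in>C. x \<in> B c} = {}" using B(2) by auto
      then show ?thesis using eq by simp
    qed
  qed
  also have "\<dots> = of_nat M * emeasure L U"
    using U assms(2) by (simp add: nn_integral_cmult_indicator)
  also have "\<dots> = ennreal (real M) * ennreal (measure L U)"
    by (simp only: ennreal_of_nat_eq_real_of_nat emeasure_eq_measure)
  also have "\<dots> = ennreal (real M * measure L U)"
    by (rule ennreal_mult[symmetric]) simp_all
  finally have le: "ennreal (\<Sum>c\<in>C. measure L (B c)) \<le> ennreal (real M * measure L U)" .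
  have "0 \<le> real M * measure L U" by simp
  with le show ?thesis by (simp only: ennreal_le_iff)
qed



lemma core:
  fixes N L :: "'a::euclidean_space measure"
  assumes N: "finite_measure N" "sets N = sets borel" and L: "finite_measure L" "sets L = sets borel"
    and K: "compact K" and U: "open U" "K \<subseteq> U"
    and bad: "\<And>x. x \<in> K \<Longrightarrow> \<forall>\<delta>>0. \<exists>r. 0 < r \<and> r < \<delta> \<and> 9 * measure N (ball x r) < 10 * measure L (ball x r)"
    and Mb: "\<And>(C::'a set) \<rho> y. finite C \<Longrightarrow> (\<forall>c\<in>C. \<forall>c'\<in>C. c \<noteq> c' \<and> \<rho> c' \<le> \<rho> c \<longrightarrow> \<rho> c \<le> dist c c') \<Longrightarrow> card {c\<in>C. y \<in> ball c (\<rho> c)} \<le> M"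
  shows "9 * measure N K \<le> 10 * (real M * measure L U)"
proof -
  interpret N: finite_measure N by fact
  interpret L: finite_measure L by fact
  have loc: "\<exists>d>0. \<exists>s>0. \<forall>y\<in>ball x d. 9 * measure N (ball y s) < 10 * measure L (ball y s) \<and> ball y s \<subseteq> U"
    if xK: "x \<in> K" for x
  proof -
    obtain e where e: "e > 0" "ball x e \<subseteq> U" using U xK open_contains_ball by blast
    obtain r where r: "0 < r" "r < e" "9 * measure N (ball x r) < 10 * measure L (ball x r)"
      using bad[OF xK] e(1) by blast
    have lim: "(\<lambda>j. 10 * measure L (ball x (r * (1 - inverse (real (Suc j)))))) \<longlonglongrightarrow> 10 * measure L (ball x r)"
      using ball_lim[OF L r(1), of x] by (rule tendsto_mult_left)
    have "eventually (\<lambda>j. 9 * measure N (ball x r) < 10 * measure L (ball x (r * (1 - inverse (real (Suc j)))))) sequentially"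
      using lim r(3) by (rule order_tendstoD(1))
    then obtain j where j: "9 * measure N (ball x r) < 10 * measure L (ball x (r * (1 - inverse (real (Suc j)))))"
      unfolding eventually_sequentially by blast
    define d where "d = r / (2 * real (Suc j))"
    have d0: "d > 0" using r(1) by (simp add: d_def)
    have rd: "r * (1 - inverse (real (Suc j))) = r - 2*d"
      by (simp add: d_def field_simps)
    have e1: "d * (2 * real (Suc j)) = r" unfolding d_def by simp
    have "d * 2 \<le> d * (2 * real (Suc j))" using d0 by (intro mult_left_mono) auto
    then have "2 * d \<le> r" using e1 by linarith
    then have s0: "r - d > 0" using d0 by linarith
    show ?thesis
    proof (rule exI[of _ d], rule conjI[OF d0], rule exI[of _ "r - d"], rule conjI[OF s0], rule ballI)
      fix y assume y: "y \<in> ball x d"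
      then have dxy: "dist x y < d" by simp
      have sub1: "ball x (r - 2*d) \<subseteq> ball y (r - d)"
      proof
        fix z assume "z \<in> ball x (r - 2*d)"
        then have "dist x z < r - 2*d" by simp
        moreover have "dist y z \<le> dist y x + dist x z" by (rule dist_triangle)
        ultimately show "z \<in> ball y (r - d)" using dxy by (simp add: dist_commute)
      qed
      have sub2: "ball y (r - d) \<subseteq> ball x r"
      proof
        fix z assume "z \<in> ball y (r - d)"
        then have "dist y z < r - d" by simp
        moreover have "dist x z \<le> dist x y + dist y z" by (rule dist_triangle)
        ultimately show "z \<in> ball x r" using dxy by simp
      qed
      have "9 * measure N (ball y (r - d)) \<le> 9 * measure N (ball x r)"
        using N.finite_measure_mono[OF sub2] N(2) by simp
      also have "\<dots> < 10 * measure L (ball x (r - 2*d))" using j rd by simp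
      also have "\<dots> \<le> 10 * measure L (ball y (r - d))"
        using L.finite_measure_mono[OF sub1] L(2) by simp
      finally have A1: "9 * measure N (ball y (r - d)) < 10 * measure L (ball y (r - d))" .
      have "ball x r \<subseteq> ball x e" using r(2) by (intro subset_ball) simp
      then have "ball y (r - d) \<subseteq> U" using sub2 e(2) by blast
      with A1 show "9 * measure N (ball y (r - d)) < 10 * measure L (ball y (r - d)) \<and> ball y (r - d) \<subseteq> U" by blast
    qed
  qed
  have "\<forall>x\<in>K. \<exists>d. d > 0 \<and> (\<exists>s>0. \<forall>y\<in>ball x d. 9 * measure N (ball y s) < 10 * measure L (ball y s) \<and> ball y s \<subseteq> U)"
    by (intro ballI loc)
  from bchoice[OF this] obtain dd where dd0: "\<forall>x\<in>K. dd x > 0 \<and> (\<exists>s>0. \<forall>y\<in>ball x (dd x). 9 * measure N (ball y s) < 10 * measure L (ball y s) \<and> ball y s \<subseteq> U)" ..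
  have dd: "dd x > 0" if "x \<in> K" for x using dd0 that by blast
  have "\<forall>x\<in>K. \<exists>s. s > 0 \<and> (\<forall>y\<in>ball x (dd x). 9 * measure N (ball y s) < 10 * measure L (ball y s) \<and> ball y s \<subseteq> U)"
  proof
    fix x assume "x \<in> K"
    then have "dd x > 0 \<and> (\<exists>s>0. \<forall>y\<in>ball x (dd x). 9 * measure N (ball y s) < 10 * measure L (ball y s) \<and> ball y s \<subseteq> U)"
      using dd0 by (rule bspec[rotated])
    then show "\<exists>s. s > 0 \<and> (\<forall>y\<in>ball x (dd x). 9 * measure N (ball y s) < 10 * measure L (ball y s) \<and> ball y s \<subseteq> U)"
      by (rule conjunct2)
  qed
  from bchoice[OF this] obtain ss where ss0: "\<forall>x\<in>K. ss x > 0 \<and> (\<forall>y\<in>ball x (dd x). 9 * measure N (ball y (ss x)) < 10 * measure L (ball y (ss x)) \<and> ball y (ss x) \<subseteq> U)" ..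
  have ss: "ss x > 0 \<and> (\<forall>y\<in>ball x (dd x). 9 * measure N (ball y (ss x)) < 10 * measure L (ball y (ss x)) \<and> ball y (ss x) \<subseteq> U)"
    if "x \<in> K" for x using ss0 that by (rule bspec)
  have cov: "K \<subseteq> (\<Union>x\<in>K. ball x (dd x))"
  proof
    fix x assume "x \<in> K"
    then have "x \<in> ball x (dd x)" using dd by simp
    then show "x \<in> (\<Union>x\<in>K. ball x (dd x))" using \<open>x \<in> K\<close> by blast
  qed
  obtain F where F: "F \<subseteq> K" "finite F" "K \<subseteq> (\<Union>x\<in>F. ball x (dd x))"
  proof -
    have op: "\<And>x. x \<in> K \<Longrightarrow> open (ball x (dd x))" by simp
    show ?thesis using compactE_image[OF K op cov] that by blast
  qed
  define pick where "pick y = (SOME x. x \<in> F \<and> y \<in> ball x (dd x))" for y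
  define \<rho> where "\<rho> y = ss (pick y)" for y
  have pk: "pick y \<in> F \<and> y \<in> ball (pick y) (dd (pick y))" if "y \<in> K" for y
  proof -
    have "\<exists>x. x \<in> F \<and> y \<in> ball x (dd x)" using F(3) that by blast
    then show ?thesis unfolding pick_def by (rule someI_ex)
  qed
  have good: "9 * measure N (ball y (\<rho> y)) < 10 * measure L (ball y (\<rho> y)) \<and> ball y (\<rho> y) \<subseteq> U" if "y \<in> K" for y
  proof -
    have "pick y \<in> K" using pk[OF that] F(1) by blast
    then show ?thesis using ss[of "pick y"] pk[OF that] unfolding \<rho>_def by blast
  qed
  have rng: "\<rho> ` K \<subseteq> ss ` F" using pk unfolding \<rho>_def by blast
  have pos: "\<forall>s\<in>ss ` F. s > 0" using ss F(1) by blast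
  obtain C where C: "C \<subseteq> K" "finite C" "\<forall>c\<in>C. \<forall>c'\<in>C. c \<noteq> c' \<and> \<rho> c' \<le> \<rho> c \<longrightarrow> \<rho> c \<le> dist c c'"
    "K \<subseteq> (\<Union>c\<in>C. ball c (\<rho> c))"
    using cover_levels[OF finite_imageI[OF F(2)] pos compact_imp_bounded[OF K] rng] by blast
  have ov: "(\<Sum>c\<in>C. measure L (ball c (\<rho> c))) \<le> real M * measure L U"
  proof (rule overlap_sum[OF L C(2)])
    show "\<And>c. c \<in> C \<Longrightarrow> ball c (\<rho> c) \<in> sets borel" by (intro borel_open open_ball)
    show "\<And>c. c \<in> C \<Longrightarrow> ball c (\<rho> c) \<subseteq> U" using good C(1) by blast
    show "U \<in> sets borel" using U(1) by (rule borel_open)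
    show "\<And>y. card {c \<in> C. y \<in> ball c (\<rho> c)} \<le> M" using Mb[OF C(2) C(3)] .
  qed
  have "open (\<Union>c\<in>C. ball c (\<rho> c))" by (rule open_UN) simp
  then have UNm: "(\<Union>c\<in>C. ball c (\<rho> c)) \<in> sets N" unfolding N(2) by (rule borel_open)
  have "measure N K \<le> measure N (\<Union>c\<in>C. ball c (\<rho> c))"
    using N.finite_measure_mono[OF C(4) UNm] .
  also have "\<dots> \<le> (\<Sum>c\<in>C. measure N (ball c (\<rho> c)))"
  proof (rule N.finite_measure_subadditive_finite[OF C(2)])
    show "(\<lambda>c. ball c (\<rho> c)) ` C \<subseteq> sets N" unfolding N(2) by (auto intro!: borel_open)
  qed
  finally have a: "9 * measure N K \<le> 9 * (\<Sum>c\<in>C. measure N (ball c (\<rho> c)))" by simp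
  also have "\<dots> = (\<Sum>c\<in>C. 9 * measure N (ball c (\<rho> c)))" by (simp add: sum_distrib_left)
  also have "\<dots> \<le> (\<Sum>c\<in>C. 10 * measure L (ball c (\<rho> c)))"
  proof (rule sum_mono)
    fix c assume "c \<in> C"
    then have "c \<in> K" using C(1) by blast
    then show "9 * measure N (ball c (\<rho> c)) \<le> 10 * measure L (ball c (\<rho> c))" using good by (simp add: less_imp_le)
  qed
  also have "\<dots> = 10 * (\<Sum>c\<in>C. measure L (ball c (\<rho> c)))" by (simp add: sum_distrib_left)
  also have "\<dots> \<le> 10 * (real M * measure L U)" using ov by simp
  finally show ?thesis by simp
qed



lemma rat_red:
  fixes N L :: "'a::euclidean_space measure"
  assumes N: "finite_measure N" "sets N = sets borel" and L: "finite_measure L" "sets L = sets borel"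
  shows "(\<exists>\<delta>>0. \<forall>r. 0 < r \<and> r < \<delta> \<longrightarrow> 10 * measure L (ball x r) \<le> 9 * measure N (ball x r)) \<longleftrightarrow>
    (\<exists>n::nat. \<forall>q::rat. 0 < real_of_rat q \<and> real_of_rat q < 1 / real (Suc n) \<longrightarrow>
       10 * measure L (ball x (real_of_rat q)) \<le> 9 * measure N (ball x (real_of_rat q)))"
proof
  assume "\<exists>\<delta>>0. \<forall>r. 0 < r \<and> r < \<delta> \<longrightarrow> 10 * measure L (ball x r) \<le> 9 * measure N (ball x r)"
  then obtain \<delta> where d: "\<delta> > 0" and H: "\<And>r. 0 < r \<Longrightarrow> r < \<delta> \<Longrightarrow> 10 * measure L (ball x r) \<le> 9 * measure N (ball x r)"
    by blast
  obtain n where n: "inverse (real (Suc n)) < \<delta>" using reals_Archimedean[OF d] by blast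
  show "\<exists>n::nat. \<forall>q::rat. 0 < real_of_rat q \<and> real_of_rat q < 1 / real (Suc n) \<longrightarrow>
       10 * measure L (ball x (real_of_rat q)) \<le> 9 * measure N (ball x (real_of_rat q))"
  proof (intro exI[of _ n] allI impI)
    fix q :: rat assume q: "0 < real_of_rat q \<and> real_of_rat q < 1 / real (Suc n)"
    then have "real_of_rat q < \<delta>" using n by (simp add: inverse_eq_divide)
    then show "10 * measure L (ball x (real_of_rat q)) \<le> 9 * measure N (ball x (real_of_rat q))"
      using H q by blast
  qed
next
  assume "\<exists>n::nat. \<forall>q::rat. 0 < real_of_rat q \<and> real_of_rat q < 1 / real (Suc n) \<longrightarrow>
       10 * measure L (ball x (real_of_rat q)) \<le> 9 * measure N (ball x (real_of_rat q))"
  then obtain n :: nat where H: "\<And>q::rat. 0 < real_of_rat q \<Longrightarrow> real_of_rat q < 1 / real (Suc n) \<Longrightarrow>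
       10 * measure L (ball x (real_of_rat q)) \<le> 9 * measure N (ball x (real_of_rat q))" by blast
  show "\<exists>\<delta>>0. \<forall>r. 0 < r \<and> r < \<delta> \<longrightarrow> 10 * measure L (ball x r) \<le> 9 * measure N (ball x r)"
  proof (intro exI[of _ "1 / real (Suc n)"] conjI allI impI)
    show "0 < 1 / real (Suc n)" by simp
    fix r assume r: "0 < r \<and> r < 1 / real (Suc n)"
    interpret N: finite_measure N by fact
    interpret L: finite_measure L by fact
    define lo where "lo j = r * (1 - inverse (real (Suc j)))" for j :: nat
    have lo: "0 \<le> lo j \<and> lo j < r" for j
    proof -
      have "0 < inverse (real (Suc j))" by simp
      have "inverse (real (Suc j)) \<le> 1" by (auto simp: inverse_le_1_iff)
      then show ?thesis using r \<open>0 < inverse (real (Suc j))\<close> unfolding lo_def by (simp add: mult_less_cancel_left1)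
    qed
    have "\<forall>j. \<exists>q. lo j < real_of_rat q \<and> real_of_rat q < r" using lo of_rat_dense by blast
    from choice[OF this] obtain qs where qs: "\<And>j. lo j < real_of_rat (qs j) \<and> real_of_rat (qs j) < r" by blast
    have Hq: "10 * measure L (ball x (real_of_rat (qs j))) \<le> 9 * measure N (ball x (real_of_rat (qs j)))" for j
    proof (rule H)
      show "0 < real_of_rat (qs j)" using lo[of j] qs[of j] by linarith
      show "real_of_rat (qs j) < 1 / real (Suc n)" using r qs[of j] by linarith
    qed
    have lim: "(\<lambda>j. measure M (ball x (real_of_rat (qs j)))) \<longlonglongrightarrow> measure M (ball x r)"
      if M: "finite_measure M" "sets M = sets borel" for M :: "'a measure"
    proof -
      interpret M: finite_measure M by fact
      have sb: "ball y t \<in> sets M" for y t unfolding M(2) by (intro borel_open open_ball)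
      show ?thesis
      proof (rule tendsto_sandwich[OF _ _ ball_lim[OF M r[THEN conjunct1], of x] tendsto_const])
        show "\<forall>\<^sub>F j in sequentially. measure M (ball x (r * (1 - inverse (real (Suc j))))) \<le> measure M (ball x (real_of_rat (qs j)))"
        proof (rule always_eventually, rule allI)
          fix j
          have "ball x (lo j) \<subseteq> ball x (real_of_rat (qs j))" using qs[of j] by (intro subset_ball) linarith
          then show "measure M (ball x (r * (1 - inverse (real (Suc j))))) \<le> measure M (ball x (real_of_rat (qs j)))"
            unfolding lo_def by (rule M.finite_measure_mono) (rule sb)
        qed
        show "\<forall>\<^sub>F j in sequentially. measure M (ball x (real_of_rat (qs j))) \<le> measure M (ball x r)"
        proof (rule always_eventually, rule allI)
          fix j
          have "ball x (real_of_rat (qs j)) \<subseteq> ball x r" using qs[of j] by (intro subset_ball) linarith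
          then show "measure M (ball x (real_of_rat (qs j))) \<le> measure M (ball x r)"
            by (rule M.finite_measure_mono) (rule sb)
        qed
      qed
    qed
    have l1: "(\<lambda>j. 10 * measure L (ball x (real_of_rat (qs j)))) \<longlonglongrightarrow> 10 * measure L (ball x r)"
      by (rule tendsto_mult_left) (rule lim[OF L])
    have l2: "(\<lambda>j. 9 * measure N (ball x (real_of_rat (qs j)))) \<longlonglongrightarrow> 9 * measure N (ball x r)"
      by (rule tendsto_mult_left) (rule lim[OF N])
    show "10 * measure L (ball x r) \<le> 9 * measure N (ball x r)"
      by (rule tendsto_le[OF trivial_limit_sequentially l2 l1]) (rule always_eventually, rule allI, rule Hq)
  qed
qed


theorem lemma3:
  fixes \<mu> :: "'a::euclidean_space set \<Rightarrow> real" and Ap :: "'a set"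
  assumes "signed_measure borel \<mu>"
    and "hahn_decomposition borel \<mu> Ap"
  shows "\<mu> {x \<in> Ap. \<exists>\<delta>>0. \<forall>r. 0 < r \<and> r < \<delta> \<longrightarrow>
            pos_part \<mu> Ap (ball x r) \<le> 10 * \<mu> (ball x r)} = \<mu> Ap"
proof -
  have m0: "\<mu> {} = 0" using assms(1) unfolding signed_measure_def by blast
  have madd: "\<And>A. range A \<subseteq> sets borel \<Longrightarrow> disjoint_family A \<Longrightarrow> (\<lambda>i. \<mu> (A i)) sums \<mu> (\<Union>i. A i)"
    using assms(1) unfolding signed_measure_def by blast
  have Apb: "Ap \<in> sets borel" using assms(2) unfolding hahn_decomposition_def by blast
  have posA: "\<And>E. E \<in> sets borel \<Longrightarrow> E \<subseteq> Ap \<Longrightarrow> \<mu> E \<ge> 0"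
    using assms(2) unfolding hahn_decomposition_def by blast
  have negA: "\<And>E. E \<in> sets borel \<Longrightarrow> E \<subseteq> UNIV - Ap \<Longrightarrow> \<mu> E \<le> 0"
    using assms(2) unfolding hahn_decomposition_def by (metis space_borel)
  define fN where "fN E = \<mu> (E \<inter> Ap)" for E
  define fL where "fL E = - \<mu> (E - Ap)" for E
  have fN0: "fN {} = 0" using m0 by (simp add: fN_def)
  have fL0: "fL {} = 0" using m0 by (simp add: fL_def)
  have fNp: "fN E \<ge> 0" if "E \<in> sets borel" for E
    unfolding fN_def by (rule posA) (use that Apb in auto)
  have fLp: "fL E \<ge> 0" if "E \<in> sets borel" for E
  proof -
    have "\<mu> (E - Ap) \<le> 0" by (rule negA) (use that Apb in auto)
    then show ?thesis by (simp add: fL_def)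
  qed
  have fNa: "(\<lambda>i. fN (A i)) sums fN (\<Union>i. A i)" if A: "range A \<subseteq> sets borel" "disjoint_family A" for A
  proof -
    have "range (\<lambda>i. A i \<inter> Ap) \<subseteq> sets borel" using A(1) Apb by auto
    moreover have "disjoint_family (\<lambda>i. A i \<inter> Ap)" using A(2) unfolding disjoint_family_on_def by auto
    ultimately have "(\<lambda>i. \<mu> (A i \<inter> Ap)) sums \<mu> (\<Union>i. A i \<inter> Ap)" by (rule madd)
    moreover have "(\<Union>i. A i \<inter> Ap) = (\<Union>i. A i) \<inter> Ap" by blast
    ultimately show ?thesis by (simp add: fN_def)
  qed
  have fLa: "(\<lambda>i. fL (A i)) sums fL (\<Union>i. A i)" if A: "range A \<subseteq> sets borel" "disjoint_family A" for A
  proof -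
    have "range (\<lambda>i. A i - Ap) \<subseteq> sets borel" using A(1) Apb by auto
    moreover have "disjoint_family (\<lambda>i. A i - Ap)" using A(2) unfolding disjoint_family_on_def by auto
    ultimately have "(\<lambda>i. \<mu> (A i - Ap)) sums \<mu> (\<Union>i. A i - Ap)" by (rule madd)
    moreover have "(\<Union>i. A i - Ap) = (\<Union>i. A i) - Ap" by blast
    ultimately have "(\<lambda>i. \<mu> (A i - Ap)) sums \<mu> ((\<Union>i. A i) - Ap)" by simp
    then have "(\<lambda>i. - \<mu> (A i - Ap)) sums (- \<mu> ((\<Union>i. A i) - Ap))" by (rule sums_minus)
    then show ?thesis by (simp add: fL_def)
  qed
  define N where "N = measure_of UNIV (sets borel) (\<lambda>E. ennreal (fN E))"
  define L where "L = measure_of UNIV (sets borel) (\<lambda>E. ennreal (fL E))"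
  have Ns: "sets N = sets borel" and Nm: "\<And>E. E \<in> sets borel \<Longrightarrow> measure N E = fN E" and Nf: "finite_measure N"
    unfolding N_def using mk_meas[of fN, OF fN0 fNp fNa] by blast+
  have Ls: "sets L = sets borel" and Lm: "\<And>E. E \<in> sets borel \<Longrightarrow> measure L E = fL E" and Lf: "finite_measure L"
    unfolding L_def using mk_meas[of fL, OF fL0 fLp fLa] by blast+
  interpret N: finite_measure N by (rule Nf)
  interpret L: finite_measure L by (rule Lf)
  have dec: "\<mu> E = measure N E - measure L E" if E: "E \<in> sets borel" for E
  proof -
    define A where "A i = (if i = 0 then E \<inter> Ap else if i = 1 then E - Ap else {})" for i :: nat
    have "range A \<subseteq> sets borel" using E Apb unfolding A_def by auto
    moreover have "disjoint_family A" unfolding disjoint_family_on_def A_def by auto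
    ultimately have s1: "(\<lambda>i. \<mu> (A i)) sums \<mu> (\<Union>i. A i)" by (rule madd)
    have "(\<Union>i. A i) = E"
    proof
      show "(\<Union>i. A i) \<subseteq> E" unfolding A_def by auto
      show "E \<subseteq> (\<Union>i. A i)"
      proof
        fix z assume "z \<in> E"
        then have "z \<in> A 0 \<or> z \<in> A 1" unfolding A_def by auto
        then show "z \<in> (\<Union>i. A i)" by blast
      qed
    qed
    with s1 have s1': "(\<lambda>i. \<mu> (A i)) sums \<mu> E" by simp
    have "(\<lambda>i. \<mu> (A i)) sums (\<Sum>i\<in>{0,1}. \<mu> (A i))"
      by (rule sums_finite) (auto simp: A_def m0)
    then have "\<mu> E = (\<Sum>i\<in>{0,1}. \<mu> (A i))" using s1' sums_unique2 by blast
    also have "\<dots> = \<mu> (E \<inter> Ap) + \<mu> (E - Ap)" by (simp add: A_def)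
    also have "\<dots> = measure N E - measure L E" using Nm[OF E] Lm[OF E] by (simp add: fN_def fL_def)
    finally show ?thesis .
  qed
  have ballb: "ball x r \<in> sets borel" for x :: 'a and r by (intro borel_open open_ball)
  have pp: "pos_part \<mu> Ap (ball x r) = measure N (ball x r)" for x r
    using Nm[OF ballb] by (simp add: pos_part_def fN_def)
  define S where "S = {x \<in> Ap. \<exists>\<delta>>0. \<forall>r. 0 < r \<and> r < \<delta> \<longrightarrow> pos_part \<mu> Ap (ball x r) \<le> 10 * \<mu> (ball x r)}"
  have cond: "(pos_part \<mu> Ap (ball x r) \<le> 10 * \<mu> (ball x r)) \<longleftrightarrow> 10 * measure L (ball x r) \<le> 9 * measure N (ball x r)" for x r
    using pp[of x r] dec[OF ballb, of x r] by linarith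
  have Seq: "S = {x. x \<in> Ap \<and> (\<exists>n::nat. \<forall>q::rat. 0 < real_of_rat q \<and> real_of_rat q < 1 / real (Suc n) \<longrightarrow>
       10 * measure L (ball x (real_of_rat q)) \<le> 9 * measure N (ball x (real_of_rat q)))}"
    unfolding S_def cond using rat_red[OF Nf Ns Lf Ls] by blast
  have [measurable]: "(\<lambda>x. measure N (ball x r)) \<in> borel_measurable borel" for r
    by (rule ball_meas[OF Nf Ns])
  have [measurable]: "(\<lambda>x. measure L (ball x r)) \<in> borel_measurable borel" for r
    by (rule ball_meas[OF Lf Ls])
  have [measurable]: "Ap \<in> sets borel" by (rule Apb)
  have "Measurable.pred borel (\<lambda>x. x \<in> Ap \<and> (\<exists>n::nat. \<forall>q::rat. 0 < real_of_rat q \<and> real_of_rat q < 1 / real (Suc n) \<longrightarrow>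
       10 * measure L (ball x (real_of_rat q)) \<le> 9 * measure N (ball x (real_of_rat q))))"
    by measurable
  then have Sb: "S \<in> sets borel" unfolding Seq Measurable.pred_def by simp
  have SAp: "S \<subseteq> Ap" unfolding S_def by blast
  define E where "E = Ap - S"
  have Eb: "E \<in> sets borel" unfolding E_def using Apb Sb by blast
  have LAp: "measure L Ap = 0" using Lm[OF Apb] m0 by (simp add: fL_def)
  have LS: "measure L S = 0"
  proof -
    have "measure L S \<le> measure L Ap" using SAp Apb Ls by (intro L.finite_measure_mono) auto
    then show ?thesis using LAp measure_nonneg[of L S] by linarith
  qed
  have badE: "\<forall>\<delta>>0. \<exists>r. 0 < r \<and> r < \<delta> \<and> 9 * measure N (ball x r) < 10 * measure L (ball x r)" if "x \<in> E" for x
  proof -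
    have "x \<in> Ap" "x \<notin> S" using that unfolding E_def by auto
    then have "\<not> (\<exists>\<delta>>0. \<forall>r. 0 < r \<and> r < \<delta> \<longrightarrow> 10 * measure L (ball x r) \<le> 9 * measure N (ball x r))"
      unfolding S_def cond by blast
    then show ?thesis by (auto simp: not_le)
  qed
  obtain M :: nat where Mb: "\<forall>(C::'a set) (\<rho>::'a\<Rightarrow>real) y. finite C \<longrightarrow>
     (\<forall>c\<in>C. \<forall>c'\<in>C. c \<noteq> c' \<and> \<rho> c' \<le> \<rho> c \<longrightarrow> \<rho> c \<le> dist c c') \<longrightarrow>
     card {c\<in>C. y \<in> ball c (\<rho> c)} \<le> M" using overlap_bound by blast
  have NE: "measure N E = 0"
  proof (rule ccontr)
    assume "measure N E \<noteq> 0"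
    then have c0: "measure N E > 0" using measure_nonneg[of N E] by linarith
    define c where "c = measure N E"
    have fin: "emeasure N (space N) \<noteq> \<infinity>" by simp
    have "ennreal (c/2) < emeasure N E" using c0 by (simp add: c_def N.emeasure_eq_measure ennreal_less_iff)
    also have "emeasure N E = (SUP K \<in> {K. K \<subseteq> E \<and> compact K}. emeasure N K)"
      by (rule inner_regular[OF Ns fin Eb])
    finally obtain K where K: "K \<subseteq> E" "compact K" "ennreal (c/2) < emeasure N K"
      unfolding less_SUP_iff by blast
    have Kb: "K \<in> sets borel" using K(2) by (intro borel_closed compact_imp_closed)
    have cK: "c/2 < measure N K" using K(3) c0 by (simp add: N.emeasure_eq_measure c_def ennreal_less_iff)
    have "emeasure L K \<le> emeasure L Ap" using K(1) Apb Ls unfolding E_def by (intro emeasure_mono) auto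
    also have "\<dots> = 0" using LAp by (simp add: L.emeasure_eq_measure)
    finally have LK: "emeasure L K = 0" by simp
    define \<eta> where "\<eta> = 9 * c / (20 * (real M + 1))"
    have eta0: "\<eta> > 0" using c0 by (simp add: \<eta>_def c_def)
    have finL: "emeasure L (space L) \<noteq> \<infinity>" by simp
    have "(INF U \<in> {U. K \<subseteq> U \<and> open U}. emeasure L U) = emeasure L K"
      by (rule outer_regular[OF Ls finL Kb, symmetric])
    also have "\<dots> < ennreal \<eta>" using LK eta0 by simp
    finally obtain U where U: "K \<subseteq> U" "open U" "emeasure L U < ennreal \<eta>"
      unfolding INF_less_iff by blast
    have LU: "measure L U < \<eta>" using U(3) eta0 by (simp add: L.emeasure_eq_measure ennreal_less_iff)
    have bK: "\<And>x. x \<in> K \<Longrightarrow> \<forall>\<delta>>0. \<exists>r. 0 < r \<and> r < \<delta> \<and> 9 * measure N (ball x r) < 10 * measure L (ball x r)"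
      using badE K(1) by blast
    have core': "9 * measure N K \<le> 10 * (real M * measure L U)"
      by (rule core[OF Nf Ns Lf Ls K(2) U(2) U(1)], (rule bK, assumption), (rule Mb[rule_format], assumption, blast))
    have "real M * measure L U \<le> (real M + 1) * measure L U" using measure_nonneg[of L U] by (simp add: algebra_simps)
    also have "\<dots> \<le> (real M + 1) * \<eta>" using LU by (intro mult_left_mono) auto
    also have "\<dots> = 9 * c / 20" unfolding \<eta>_def by (simp add: field_simps)
    finally have "9 * measure N K \<le> 10 * (9 * c / 20)" using core' by linarith
    then have "measure N K \<le> c / 2" by simp
    then show False using cK by linarith
  qed
  have "measure N Ap = measure N S + measure N E"
  proof -
    have "measure N E = measure N Ap - measure N S" unfolding E_def
      using Apb Sb SAp Ns by (intro N.finite_measure_Diff) auto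
    then show ?thesis by simp
  qed
  then have NS: "measure N S = measure N Ap" using NE by simp
  have "\<mu> S = measure N S - measure L S" by (rule dec[OF Sb])
  also have "\<dots> = measure N Ap - measure L Ap" using NS LS LAp by simp
  also have "\<dots> = \<mu> Ap" by (rule dec[OF Apb, symmetric])
  finally show ?thesis unfolding S_def .
qed


end
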